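(* Let $\alpha\in(0,1)$, $R>0$, and consider the initial state $(x_O,y_O,y_T)$ at time $0$. Let $C=\{(x,y):(x-x_O)^2+(y-y_O)^2=R^2\}$ be the boundary of the observation disk and $\mathrm{DL}=\{(\pm s\alpha,\,y_T+s\sqrt{1-\alpha^2}):s\ge0\}$ the Decision Line. If $C\cap\mathrm{DL}$ consists of exactly two points, then the state belongs to $\mathscr B_2\cup\mathscr B_3$; consequently the optimal observation time is non-zero.
   Context: Target: position $(0,y_T(t))$, $\dot y_T=1$, $y_T(0)=y_T$. Observer: position $(x_O(t),y_O(t))$ starting at $(x_O,y_O)$, $\dot x_O=\alpha\cos\psi(t)$, $\dot y_O=\alpha\sin\psi(t)$, heading $\psi:[0,\infty)\to\mathbb R$ a measurable control. Observation disk: closed disk of radius $R$ centered at the observer. For a control, $t_2=\inf\{t\ge0:x_O(t)^2+(y_O(t)-y_T(t))^2\le R^2\}$, $t_f=\inf\{t\ge t_2:x_O(t)^2+(y_O(t)-y_T(t))^2>R^2\}$, and $t_{\text{obs}}=t_f-t_2$ (taken to be $0$ if no contact occurs). The optimal observation time $t^*_{\text{obs}}$ is the supremum of $t_{\text{obs}}$ over all controls. The Decision Line is the set of points $Z$ whose Apollonius circle $\{P:|PZ|=\alpha|PT|\}$ with the initial target position $T=(0,y_T)$ is tangent to the target's path $\{(0,y):y\ge y_T\}$, which is the union of the two rays given. $\mathscr B_1=\{t^*_{\text{obs}}=0\}$, $\mathscr B_3=\{t^*_{\text{obs}}=2R/(1-\alpha)\}$, $\mathscr B_2=\{0<t^*_{\text{obs}}<2R/(1-\alpha)\}$.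 *)

theory Defs
  imports "HOL-Analysis.Analysis"
begin

definition obs_x :: "real \<Rightarrow> (real \<Rightarrow> real) \<Rightarrow> real \<Rightarrow> real \<Rightarrow> real" where
  "obs_x \<alpha> \<psi> xO t = xO + (LINT s:{0..t}|lborel. \<alpha> * cos (\<psi> s))"

definition obs_y :: "real \<Rightarrow> (real \<Rightarrow> real) \<Rightarrow> real \<Rightarrow> real \<Rightarrow> real" where
  "obs_y \<alpha> \<psi> yO t = yO + (LINT s:{0..t}|lborel. \<alpha> * sin (\<psi> s))"

definition sqdist_OT :: "real \<Rightarrow> (real \<Rightarrow> real) \<Rightarrow> real \<Rightarrow> real \<Rightarrow> real \<Rightarrow> real \<Rightarrow> real" where
  "sqdist_OT \<alpha> \<psi> xO yO yT t =
     (obs_x \<alpha> \<psi> xO t)\<^sup>2 + (obs_y \<alpha> \<psi> yO t - (yT + t))\<^sup>2"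

definition t2_time :: "real \<Rightarrow> real \<Rightarrow> (real \<Rightarrow> real) \<Rightarrow> real \<Rightarrow> real \<Rightarrow> real \<Rightarrow> real" where
  "t2_time \<alpha> R \<psi> xO yO yT = Inf {t. 0 \<le> t \<and> sqdist_OT \<alpha> \<psi> xO yO yT t \<le> R\<^sup>2}"

definition tf_time :: "real \<Rightarrow> real \<Rightarrow> (real \<Rightarrow> real) \<Rightarrow> real \<Rightarrow> real \<Rightarrow> real \<Rightarrow> real" where
  "tf_time \<alpha> R \<psi> xO yO yT =
     Inf {t. t2_time \<alpha> R \<psi> xO yO yT \<le> t \<and> sqdist_OT \<alpha> \<psi> xO yO yT t > R\<^sup>2}"

definition t_obs :: "real \<Rightarrow> real \<Rightarrow> (real \<Rightarrow> real) \<Rightarrow> real \<Rightarrow> real \<Rightarrow> real \<Rightarrow> real" where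
  "t_obs \<alpha> R \<psi> xO yO yT =
     (if {t. 0 \<le> t \<and> sqdist_OT \<alpha> \<psi> xO yO yT t \<le> R\<^sup>2} = {} then 0
      else tf_time \<alpha> R \<psi> xO yO yT - t2_time \<alpha> R \<psi> xO yO yT)"

definition opt_obs :: "real \<Rightarrow> real \<Rightarrow> real \<Rightarrow> real \<Rightarrow> real \<Rightarrow> real" where
  "opt_obs \<alpha> R xO yO yT =
     Sup {t_obs \<alpha> R \<psi> xO yO yT | \<psi>. \<psi> \<in> borel_measurable lborel}"

definition B1 :: "real \<Rightarrow> real \<Rightarrow> (real \<times> real \<times> real) set" where
  "B1 \<alpha> R = {(xO, yO, yT). opt_obs \<alpha> R xO yO yT = 0}"

definition B2 :: "real \<Rightarrow> real \<Rightarrow> (real \<times> real \<times> real) set" where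
  "B2 \<alpha> R = {(xO, yO, yT). 0 < opt_obs \<alpha> R xO yO yT \<and> opt_obs \<alpha> R xO yO yT < 2 * R / (1 - \<alpha>)}"

definition B3 :: "real \<Rightarrow> real \<Rightarrow> (real \<times> real \<times> real) set" where
  "B3 \<alpha> R = {(xO, yO, yT). opt_obs \<alpha> R xO yO yT = 2 * R / (1 - \<alpha>)}"

definition decision_line :: "real \<Rightarrow> real \<Rightarrow> (real \<times> real) set" where
  "decision_line \<alpha> yT =
     {(x, y). \<exists>s\<ge>0. (x = s * \<alpha> \<or> x = - (s * \<alpha>)) \<and> y = yT + s * sqrt (1 - \<alpha>\<^sup>2)}"

definition obs_circle :: "real \<Rightarrow> real \<Rightarrow> real \<Rightarrow> (real \<times> real) set" where
  "obs_circle R xO yO = {(x, y). (x - xO)\<^sup>2 + (y - yO)\<^sup>2 = R\<^sup>2}"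

end

theory Submission
  imports Defs
begin

lemma bm_int:
  fixes \<psi> :: "real \<Rightarrow> real"
  assumes "\<psi> \<in> borel_measurable lborel"
  shows "set_integrable lborel {a..b} (\<lambda>s. c * cos (\<psi> s))"
    and "set_integrable lborel {a..b} (\<lambda>s. c * sin (\<psi> s))"
proof -
  have ci: "set_integrable lborel {a..b} (\<lambda>_. c)"
    by (simp add: borel_integrable_atLeastAtMost')
  show "set_integrable lborel {a..b} (\<lambda>s. c * cos (\<psi> s))"
    apply (rule set_integrable_bound[OF ci])
    using assms apply (simp add: set_borel_measurable_def)
    by (auto simp: abs_mult intro!: mult_left_le)
  show "set_integrable lborel {a..b} (\<lambda>s. c * sin (\<psi> s))"
    apply (rule set_integrable_bound[OF ci])
    using assms apply (simp add: set_borel_measurable_def)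
    by (auto simp: abs_mult intro!: mult_left_le)
qed

lemma bm_int2:
  fixes \<psi> :: "real \<Rightarrow> real"
  assumes "\<psi> \<in> borel_measurable lborel"
  shows "set_integrable lborel {a<..b} (\<lambda>s. c * cos (\<psi> s))"
    and "set_integrable lborel {a<..b} (\<lambda>s. c * sin (\<psi> s))"
  by (rule set_integrable_subset[OF bm_int(1)[OF assms, of a b]], auto)
     (rule set_integrable_subset[OF bm_int(2)[OF assms, of a b]], auto)

lemma split_int:
  fixes f :: "real \<Rightarrow> real"
  assumes "set_integrable lborel {0..t'} f" "0 \<le> t" "t \<le> t'"
  shows "(LINT s:{0..t'}|lborel. f s) = (LINT s:{0..t}|lborel. f s) + (LINT s:{t<..t'}|lborel. f s)"
proof -
  have e: "{0..t'} = {0..t} \<union> {t<..t'}" using assms by auto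
  have i1: "set_integrable lborel {0..t} f"
    by (rule set_integrable_subset[OF assms(1)]) (use assms in auto)
  have i2: "set_integrable lborel {t<..t'} f"
    by (rule set_integrable_subset[OF assms(1)]) (use assms in auto)
  show ?thesis unfolding e
    by (rule set_integral_Un[OF _ i1 i2]) auto
qed

lemma unit_bound:
  fixes p q x \<alpha> :: real
  assumes "p\<^sup>2 + q\<^sup>2 = 1" "0 \<le> \<alpha>"
  shows "p * (\<alpha> * cos x) + q * (\<alpha> * sin x) \<le> \<alpha>"
proof -
  have id: "(p * cos x + q * sin x)\<^sup>2 + (p * sin x - q * cos x)\<^sup>2 = (p\<^sup>2 + q\<^sup>2) * ((sin x)\<^sup>2 + (cos x)\<^sup>2)"
    by algebra
  have id2: "(p * cos x + q * sin x)\<^sup>2 + (p * sin x - q * cos x)\<^sup>2 = 1"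
    using id assms(1) sin_cos_squared_add[of x] by simp
  have "(p * cos x + q * sin x)\<^sup>2 \<le> 1" using id2 zero_le_power2[of "p * sin x - q * cos x"] by linarith
  then have "p * cos x + q * sin x \<le> 1"
    using power2_le_imp_le[of "p * cos x + q * sin x" 1] by simp
  then have "\<alpha> * (p * cos x + q * sin x) \<le> \<alpha> * 1" using assms(2) by (rule mult_left_mono)
  then show ?thesis by (simp add: algebra_simps)
qed

lemma disp:
  fixes \<psi> :: "real \<Rightarrow> real"
  assumes m: "\<psi> \<in> borel_measurable lborel" and a: "0 \<le> \<alpha>" and tt: "0 \<le> t" "t \<le> t'"
  shows "(obs_x \<alpha> \<psi> xO t' - obs_x \<alpha> \<psi> xO t)\<^sup>2 + (obs_y \<alpha> \<psi> yO t' - obs_y \<alpha> \<psi> yO t)\<^sup>2 \<le> (\<alpha> * (t' - t))\<^sup>2"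
proof -
  define dx where "dx = (LINT s:{t<..t'}|lborel. \<alpha> * cos (\<psi> s))"
  define dy where "dy = (LINT s:{t<..t'}|lborel. \<alpha> * sin (\<psi> s))"
  have ex: "obs_x \<alpha> \<psi> xO t' - obs_x \<alpha> \<psi> xO t = dx"
    unfolding obs_x_def dx_def using split_int[OF bm_int(1)[OF m] tt] by simp
  have ey: "obs_y \<alpha> \<psi> yO t' - obs_y \<alpha> \<psi> yO t = dy"
    unfolding obs_y_def dy_def using split_int[OF bm_int(2)[OF m] tt] by simp
  have ci: "set_integrable lborel {t<..t'} (\<lambda>_. \<alpha>)"
    by (rule set_integrable_subset[of _ "{t..t'}"]) (auto simp: borel_integrable_atLeastAtMost')
  have key: "p * dx + q * dy \<le> \<alpha> * (t' - t)" if pq: "p\<^sup>2 + q\<^sup>2 = 1" for p q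
  proof -
    have i1: "set_integrable lborel {t<..t'} (\<lambda>s. p * (\<alpha> * cos (\<psi> s)))"
      using bm_int2(1)[OF m, of t t' "p * \<alpha>"] by (simp add: mult.assoc)
    have i2: "set_integrable lborel {t<..t'} (\<lambda>s. q * (\<alpha> * sin (\<psi> s)))"
      using bm_int2(2)[OF m, of t t' "q * \<alpha>"] by (simp add: mult.assoc)
    have "p * dx + q * dy = (LINT s:{t<..t'}|lborel. p * (\<alpha> * cos (\<psi> s)) + q * (\<alpha> * sin (\<psi> s)))"
      unfolding dx_def dy_def set_integral_add(2)[OF i1 i2] by simp
    also have "\<dots> \<le> (LINT s:{t<..t'}|lborel. \<alpha>)"
      by (rule set_integral_mono[OF set_integral_add(1)[OF i1 i2] ci]) (rule unit_bound[OF pq a])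
    also have "\<dots> = \<alpha> * (t' - t)"
      using tt by (subst set_integral_const) auto
    finally show ?thesis .
  qed
  show ?thesis
  proof (cases "dx\<^sup>2 + dy\<^sup>2 = 0")
    case True then show ?thesis unfolding ex ey by simp
  next
    case False
    define n where "n = sqrt (dx\<^sup>2 + dy\<^sup>2)"
    have npos: "n > 0" using False n_def by (simp add: add_nonneg_nonneg order_neq_le_trans)
    have nsq: "n\<^sup>2 = dx\<^sup>2 + dy\<^sup>2" unfolding n_def by simp
    have "(dx / n)\<^sup>2 + (dy / n)\<^sup>2 = (dx\<^sup>2 + dy\<^sup>2) / n\<^sup>2" by (simp add: power_divide add_divide_distrib)
    also have "\<dots> = 1" using npos by (simp add: nsq[symmetric])
    finally have "(dx / n)\<^sup>2 + (dy / n)\<^sup>2 = 1" .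
    from key[OF this] have "(dx * dx + dy * dy) / n \<le> \<alpha> * (t' - t)"
      by (simp add: add_divide_distrib)
    also have "(dx * dx + dy * dy) / n = n" using nsq npos by (simp add: power2_eq_square field_simps)
    finally have "n \<le> \<alpha> * (t' - t)" .
    then have "n\<^sup>2 \<le> (\<alpha> * (t' - t))\<^sup>2" using npos by (intro power_mono) auto
    then show ?thesis unfolding ex ey nsq .
  qed
qed

lemma upper:
  fixes \<psi> :: "real \<Rightarrow> real"
  assumes m: "\<psi> \<in> borel_measurable lborel" and a: "0 < \<alpha>" "\<alpha> < 1" "0 < R"
  shows "t_obs \<alpha> R \<psi> xO yO yT \<le> 2 * R / (1 - \<alpha>)"
proof -
  define S where "S = {t. 0 \<le> t \<and> sqdist_OT \<alpha> \<psi> xO yO yT t \<le> R\<^sup>2}"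
  define t2 where "t2 = t2_time \<alpha> R \<psi> xO yO yT"
  define Tset where "Tset = {t. t2 \<le> t \<and> sqdist_OT \<alpha> \<psi> xO yO yT t > R\<^sup>2}"
  define tf where "tf = tf_time \<alpha> R \<psi> xO yO yT"
  have t2S: "t2 = Inf S" unfolding t2_def t2_time_def S_def ..
  have tfT: "tf = Inf Tset" unfolding tf_def tf_time_def Tset_def t2_def ..
  define B where "B = 2 * R / (1 - \<alpha>)"
  have B0: "0 \<le> B" using a unfolding B_def by simp
  show ?thesis
  proof (cases "S = {}")
    case True then show ?thesis unfolding t_obs_def S_def using a by simp
  next
    case False
    have to: "t_obs \<alpha> R \<psi> xO yO yT = tf - t2" unfolding t_obs_def S_def[symmetric] t2_def[symmetric] tf_def[symmetric] using False by simp
    show ?thesis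
    proof (rule ccontr)
      assume "\<not> ?thesis"
      hence gt: "tf - t2 > B" using to B_def by simp
      define \<epsilon> where "\<epsilon> = (tf - t2 - B) / 3"
      have ep: "\<epsilon> > 0" using gt \<epsilon>_def by simp
      have bdd: "bdd_below S" unfolding S_def bdd_below_def by auto
      obtain u where uS: "u \<in> S" and ul: "u < t2 + \<epsilon>" using cInf_lessD[OF False, of "t2 + \<epsilon>"] t2S ep by auto
      define w where "w = tf - \<epsilon>"
      have u0: "0 \<le> u" and du: "sqdist_OT \<alpha> \<psi> xO yO yT u \<le> R\<^sup>2" using uS S_def by auto
      have "t2 \<le> u" using cInf_lower[OF uS bdd] t2S by simp
      have e3: "3 * \<epsilon> = tf - t2 - B" unfolding \<epsilon>_def by simp
      have wu: "w - u > B" using ul ep e3 unfolding w_def by linarith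
      have "w \<ge> t2" using wu \<open>t2 \<le> u\<close> B0 by simp
      have dw: "sqdist_OT \<alpha> \<psi> xO yO yT w \<le> R\<^sup>2"
      proof (rule ccontr)
        assume "\<not> ?thesis"
        hence wT: "w \<in> Tset" using \<open>w \<ge> t2\<close> Tset_def by auto
        have "bdd_below Tset" unfolding Tset_def bdd_below_def by auto
        hence "tf \<le> w" using cInf_lower[OF wT] tfT by simp
        thus False using w_def ep by simp
      qed
      define L where "L = w - u"
      have L0: "L > 0" using wu B0 L_def by simp
      define xu where "xu = obs_x \<alpha> \<psi> xO u"
      define xw where "xw = obs_x \<alpha> \<psi> xO w"
      define yu where "yu = obs_y \<alpha> \<psi> yO u - (yT + u)"
      define yw where "yw = obs_y \<alpha> \<psi> yO w - (yT + w)"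
      define dx where "dx = xw - xu"
      define dy where "dy = obs_y \<alpha> \<psi> yO w - obs_y \<alpha> \<psi> yO u"
      have D: "dx\<^sup>2 + dy\<^sup>2 \<le> (\<alpha> * L)\<^sup>2"
        unfolding dx_def dy_def xw_def xu_def L_def using disp[OF m _ u0, of \<alpha> w xO yO] a wu B0 by simp
      have du': "xu\<^sup>2 + yu\<^sup>2 \<le> R\<^sup>2" using du unfolding sqdist_OT_def xu_def yu_def .
      have dw': "xw\<^sup>2 + yw\<^sup>2 \<le> R\<^sup>2" using dw unfolding sqdist_OT_def xw_def yw_def .
      have su: "sqrt (xu\<^sup>2 + yu\<^sup>2) \<le> R" using real_sqrt_le_mono[OF du'] a by simp
      have sw: "sqrt (xw\<^sup>2 + yw\<^sup>2) \<le> R" using real_sqrt_le_mono[OF dw'] a by simp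
      have sd: "sqrt (dx\<^sup>2 + dy\<^sup>2) \<le> \<alpha> * L" using real_sqrt_le_mono[OF D] a L0 by simp
      have h1: "sqrt ((xw + - xu)\<^sup>2 + (yw + - yu)\<^sup>2) \<le> sqrt (xw\<^sup>2 + yw\<^sup>2) + sqrt ((- xu)\<^sup>2 + (- yu)\<^sup>2)"
        by (rule real_sqrt_sum_squares_triangle_ineq)
      have h2: "sqrt ((dx + - dx)\<^sup>2 + (dy + (L - dy))\<^sup>2) \<le> sqrt (dx\<^sup>2 + dy\<^sup>2) + sqrt ((- dx)\<^sup>2 + (L - dy)\<^sup>2)"
        by (rule real_sqrt_sum_squares_triangle_ineq)
      have e1: "(L - dy)\<^sup>2 = (yw + - yu)\<^sup>2"
        unfolding L_def dy_def yw_def yu_def by (simp add: power2_eq_square algebra_simps)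
      have e2: "(- dx)\<^sup>2 = (xw + - xu)\<^sup>2" unfolding dx_def by (simp add: power2_eq_square algebra_simps)
      have "L \<le> \<alpha> * L + 2 * R"
        using h1 h2 e1 e2 su sw sd L0 by simp
      hence "(1 - \<alpha>) * L \<le> 2 * R" by (simp add: algebra_simps)
      hence "L \<le> B" unfolding B_def using a by (simp add: field_simps)
      thus False using wu L_def by simp
    qed
  qed
qed

lemma const_obs:
  fixes \<theta> :: real
  assumes "0 \<le> t"
  shows "obs_x \<alpha> (\<lambda>_. \<theta>) xO t = xO + \<alpha> * cos \<theta> * t"
    and "obs_y \<alpha> (\<lambda>_. \<theta>) yO t = yO + \<alpha> * sin \<theta> * t"
  unfolding obs_x_def obs_y_def using assms by (subst set_integral_const; simp)+

lemma conv_quad: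
  fixes A B C E a b t M :: real
  assumes "a \<le> t" "t \<le> b" "(A + B * a)\<^sup>2 + (C + E * a)\<^sup>2 \<le> M" "(A + B * b)\<^sup>2 + (C + E * b)\<^sup>2 \<le> M"
  shows "(A + B * t)\<^sup>2 + (C + E * t)\<^sup>2 \<le> M"
proof (cases "a = b")
  case True then show ?thesis using assms by (metis antisym)
next
  case False
  define qa where "qa = (A + B * a)\<^sup>2 + (C + E * a)\<^sup>2"
  define qb where "qb = (A + B * b)\<^sup>2 + (C + E * b)\<^sup>2"
  define qt where "qt = (A + B * t)\<^sup>2 + (C + E * t)\<^sup>2"
  have id: "(b - t) * qa + (t - a) * qb - (b - a) * qt = (b - a) * (t - a) * (b - t) * (B\<^sup>2 + E\<^sup>2)"
    unfolding qa_def qb_def qt_def by algebra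
  have "(b - a) * (t - a) * (b - t) * (B\<^sup>2 + E\<^sup>2) \<ge> 0" using assms(1,2) by simp
  hence "(b - a) * qt \<le> (b - t) * qa + (t - a) * qb" using id by linarith
  also have "\<dots> \<le> (b - t) * M + (t - a) * M"
    using assms qa_def qb_def by (intro add_mono mult_left_mono) auto
  also have "\<dots> = (b - a) * M" by (simp add: algebra_simps)
  finally have "(b - a) * qt \<le> (b - a) * M" .
  moreover have "b - a > 0" using assms(1,2) False by simp
  ultimately have "qt \<le> M" by simp
  then show ?thesis unfolding qt_def .
qed

lemma lower:
  fixes \<theta> :: real
  assumes a: "0 < \<alpha>" "\<alpha> < 1" "0 < R" and t1: "0 \<le> t1"
    and q1: "(xO + \<alpha> * cos \<theta> * t1)\<^sup>2 + (yO + \<alpha> * sin \<theta> * t1 - (yT + t1))\<^sup>2 < R\<^sup>2"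
  shows "t_obs \<alpha> R (\<lambda>_. \<theta>) xO yO yT > 0"
proof -
  define q where "q t = (xO + \<alpha> * cos \<theta> * t)\<^sup>2 + (yO + \<alpha> * sin \<theta> * t - (yT + t))\<^sup>2" for t
  have qform: "q t = (xO + (\<alpha> * cos \<theta>) * t)\<^sup>2 + ((yO - yT) + (\<alpha> * sin \<theta> - 1) * t)\<^sup>2" for t
    unfolding q_def by (simp add: algebra_simps)
  have sq: "sqdist_OT \<alpha> (\<lambda>_. \<theta>) xO yO yT t = q t" if "0 \<le> t" for t
    unfolding sqdist_OT_def q_def using const_obs[OF that] by simp
  define S where "S = {t. 0 \<le> t \<and> sqdist_OT \<alpha> (\<lambda>_. \<theta>) xO yO yT t \<le> R\<^sup>2}"
  have S': "S = {t. 0 \<le> t \<and> q t \<le> R\<^sup>2}" unfolding S_def using sq by auto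
  have cl: "closed S" unfolding S' q_def
    by (intro closed_Collect_conj closed_Collect_le continuous_intros)
  have t1S: "t1 \<in> S" using t1 q1 unfolding S' q_def by simp
  hence ne: "S \<noteq> {}" by auto
  have bdd: "bdd_below S" unfolding S' bdd_below_def by auto
  define t2 where "t2 = Inf S"
  have t2S: "t2 \<in> S" using closed_contains_Inf[OF ne bdd cl] t2_def by simp
  have t2le: "t2 \<le> t1" using cInf_lower[OF t1S bdd] t2_def by simp
  have t20: "0 \<le> t2" and qt2: "q t2 \<le> R\<^sup>2" using t2S S' by auto
  have "isCont q t1" unfolding q_def by (intro continuous_intros)
  hence ev: "eventually (\<lambda>t. q t < R\<^sup>2) (at t1)"
    using q1 unfolding isCont_def q_def[symmetric] by (rule order_tendstoD(2))
  obtain d where d0: "d > 0" and dd: "\<And>x. x \<noteq> t1 \<Longrightarrow> dist x t1 < d \<Longrightarrow> q x < R\<^sup>2"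
    using ev unfolding eventually_at by auto
  define t3 where "t3 = t1 + d / 2"
  have t3g: "t3 > t1" using d0 t3_def by simp
  have qt3: "q t3 \<le> R\<^sup>2" using dd[of t3] d0 t3_def by (simp add: dist_real_def)
  define Tset where "Tset = {t. t2_time \<alpha> R (\<lambda>_. \<theta>) xO yO yT \<le> t \<and> sqdist_OT \<alpha> (\<lambda>_. \<theta>) xO yO yT t > R\<^sup>2}"
  have t2e: "t2_time \<alpha> R (\<lambda>_. \<theta>) xO yO yT = t2" unfolding t2_time_def t2_def S_def ..
  define t4 where "t4 = max t3 ((yO - yT + R + 1) / (1 - \<alpha>))"
  have t4a: "t4 \<ge> t3" unfolding t4_def by simp
  have "t4 \<ge> (yO - yT + R + 1) / (1 - \<alpha>)" unfolding t4_def by simp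
  hence "(1 - \<alpha>) * t4 \<ge> (1 - \<alpha>) * ((yO - yT + R + 1) / (1 - \<alpha>))"
    using a by (intro mult_left_mono) auto
  hence t4b: "(1 - \<alpha>) * t4 \<ge> yO - yT + R + 1" using a by simp
  have t40: "t4 \<ge> 0" using t4a t3g t1 by simp
  have "\<alpha> * sin \<theta> * t4 \<le> \<alpha> * 1 * t4"
    using a t40 by (intro mult_right_mono mult_left_mono) auto
  hence yneg: "yO + \<alpha> * sin \<theta> * t4 - (yT + t4) \<le> - (R + 1)" using t4b by (simp add: algebra_simps)
  define yy where "yy = yO + \<alpha> * sin \<theta> * t4 - (yT + t4)"
  have "(R + 1)\<^sup>2 \<le> (- yy)\<^sup>2"
    using yneg a unfolding yy_def by (intro power_mono) auto
  hence "(R + 1)\<^sup>2 \<le> yy\<^sup>2" by simp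
  moreover have "R\<^sup>2 < (R + 1)\<^sup>2" using a by (intro power_strict_mono) auto
  moreover have "yy\<^sup>2 \<le> q t4" unfolding q_def yy_def by simp
  ultimately have "q t4 > R\<^sup>2" by linarith
  hence t4T: "t4 \<in> Tset" unfolding Tset_def t2e using sq[OF t40] t4a t3g t2le by simp
  have lowT: "t3 \<le> x" if "x \<in> Tset" for x
  proof (rule ccontr)
    assume "\<not> t3 \<le> x"
    hence xl: "x \<le> t3" by simp
    have xg: "t2 \<le> x" and xq: "sqdist_OT \<alpha> (\<lambda>_. \<theta>) xO yO yT x > R\<^sup>2" using that unfolding Tset_def t2e by auto
    have "q x \<le> R\<^sup>2"
      using conv_quad[OF xg xl, of xO "\<alpha> * cos \<theta>" "yO - yT" "\<alpha> * sin \<theta> - 1" "R\<^sup>2"] qt2 qt3 qform by simp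
    thus False using xq sq[of x] xg t20 by simp
  qed
  have "t3 \<le> Inf Tset" using t4T lowT by (intro cInf_greatest) auto
  moreover have "t_obs \<alpha> R (\<lambda>_. \<theta>) xO yO yT = Inf Tset - t2"
    unfolding t_obs_def tf_time_def S_def[symmetric] Tset_def[symmetric] t2e using ne by (simp add: Tset_def t2e)
  ultimately show ?thesis using t3g t2le by simp
qed

lemma point_eq:
  fixes \<alpha> R xO yO yT s x y :: real
  assumes a: "0 < \<alpha>" "\<alpha> < 1" "0 < R"
    and H: "\<forall>t\<ge>0. \<alpha> * t + R \<le> sqrt (xO\<^sup>2 + (yO - (yT + t))\<^sup>2)"
    and s0: "0 \<le> s" and xs: "x = s * \<alpha> \<or> x = - (s * \<alpha>)"
    and ys: "y = yT + s * sqrt (1 - \<alpha>\<^sup>2)" and circ: "(x - xO)\<^sup>2 + (y - yO)\<^sup>2 = R\<^sup>2"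
  shows "sqrt (xO\<^sup>2 + (yO - (yT + s / sqrt (1 - \<alpha>\<^sup>2)))\<^sup>2) = \<alpha> * (s / sqrt (1 - \<alpha>\<^sup>2)) + R"
proof -
  define c where "c = sqrt (1 - \<alpha>\<^sup>2)"
  have c2: "c\<^sup>2 = 1 - \<alpha>\<^sup>2" unfolding c_def using a by (simp add: abs_square_less_1 less_imp_le)
  have cpos: "c > 0" unfolding c_def using a by (simp add: abs_square_less_1)
  define u where "u = s / c"
  have u0: "u \<ge> 0" unfolding u_def using s0 cpos by simp
  have x2: "x\<^sup>2 = s\<^sup>2 * \<alpha>\<^sup>2" using xs by (auto simp: power_mult_distrib)
  have "s * c - u = (s * c\<^sup>2 - s) / c" unfolding u_def using cpos by (simp add: field_simps power2_eq_square)
  also have "\<dots> = - (s * \<alpha>\<^sup>2 / c)" unfolding c2 by (simp add: algebra_simps)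
  finally have d1: "s * c - u = - (s * \<alpha>\<^sup>2 / c)" .
  have "x\<^sup>2 + (y - (yT + u))\<^sup>2 = s\<^sup>2 * \<alpha>\<^sup>2 + (s * \<alpha>\<^sup>2 / c)\<^sup>2"
  proof -
    have "y - (yT + u) = s * c - u" using ys unfolding c_def by simp
    then show ?thesis using x2 d1 by simp
  qed
  also have "\<dots> = s\<^sup>2 * \<alpha>\<^sup>2 * (c\<^sup>2 + \<alpha>\<^sup>2) / c\<^sup>2" using cpos by (simp add: field_simps power2_eq_square)
  also have "\<dots> = (\<alpha> * u)\<^sup>2" unfolding u_def using c2 cpos by (simp add: field_simps power2_eq_square)
  finally have e2: "x\<^sup>2 + (y - (yT + u))\<^sup>2 = (\<alpha> * u)\<^sup>2" .
  have tri: "sqrt ((xO - x + x)\<^sup>2 + (yO - y + (y - (yT + u)))\<^sup>2)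
      \<le> sqrt ((xO - x)\<^sup>2 + (yO - y)\<^sup>2) + sqrt (x\<^sup>2 + (y - (yT + u))\<^sup>2)"
    by (rule real_sqrt_sum_squares_triangle_ineq)
  have r1: "sqrt ((xO - x)\<^sup>2 + (yO - y)\<^sup>2) = R"
    using circ a by (simp add: power2_commute)
  have r2: "sqrt (x\<^sup>2 + (y - (yT + u))\<^sup>2) = \<alpha> * u" using e2 a u0 by simp
  have le: "sqrt (xO\<^sup>2 + (yO - (yT + u))\<^sup>2) \<le> \<alpha> * u + R" 
  proof -
    have e3: "xO - x + x = xO" and e4: "yO - y + (y - (yT + u)) = yO - (yT + u)" by simp_all
    show ?thesis using tri[unfolded e3 e4 r1 r2] by linarith
  qed
  have ge: "\<alpha> * u + R \<le> sqrt (xO\<^sup>2 + (yO - (yT + u))\<^sup>2)" using H u0 by simp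
  show ?thesis using le ge unfolding u_def c_def by simp
qed

lemma mem_unpack:
  assumes "Z \<in> obs_circle R xO yO \<inter> decision_line \<alpha> yT"
  shows "\<exists>s x y. Z = (x, y) \<and> 0 \<le> s \<and> (x = s * \<alpha> \<or> x = - (s * \<alpha>)) \<and>
     y = yT + s * sqrt (1 - \<alpha>\<^sup>2) \<and> (x - xO)\<^sup>2 + (y - yO)\<^sup>2 = R\<^sup>2"
  using assms by (auto simp: obs_circle_def decision_line_def)

lemma geo:
  fixes \<alpha> R xO yO yT :: real
  assumes a: "0 < \<alpha>" "\<alpha> < 1" "0 < R"
    and card: "card (obs_circle R xO yO \<inter> decision_line \<alpha> yT) = 2"
  shows "\<exists>t\<ge>0. sqrt (xO\<^sup>2 + (yO - (yT + t))\<^sup>2) < \<alpha> * t + R"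
proof (rule ccontr)
  assume "\<not> ?thesis"
  hence H: "\<forall>t\<ge>0. \<alpha> * t + R \<le> sqrt (xO\<^sup>2 + (yO - (yT + t))\<^sup>2)" by (auto simp: not_less)
  define c where "c = sqrt (1 - \<alpha>\<^sup>2)"
  have c2: "c\<^sup>2 = 1 - \<alpha>\<^sup>2" unfolding c_def using a by (simp add: abs_square_less_1 less_imp_le)
  have cpos: "c > 0" unfolding c_def using a by (simp add: abs_square_less_1)
  define F where "F t = xO\<^sup>2 + (yO - (yT + t))\<^sup>2 - (\<alpha> * t + R)\<^sup>2" for t
  have Fge: "F t \<ge> 0" if "t \<ge> 0" for t
  proof -
    have "(\<alpha> * t + R)\<^sup>2 \<le> (sqrt (xO\<^sup>2 + (yO - (yT + t))\<^sup>2))\<^sup>2"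
      using H that a by (intro power_mono) auto
    then show ?thesis unfolding F_def by simp
  qed
  define k where "k = 1 - \<alpha>\<^sup>2"
  define \<beta> where "\<beta> = yO - yT + \<alpha> * R"
  define K where "K = xO\<^sup>2 + (yO - yT)\<^sup>2 - R\<^sup>2"
  have kpos: "k > 0" unfolding k_def using c2 cpos by (metis zero_less_power2 less_irrefl)
  have fq: "F t = k * t\<^sup>2 - 2 * \<beta> * t + K" for t
    unfolding F_def k_def \<beta>_def K_def by (simp add: power2_eq_square algebra_simps)
  obtain Z1 Z2 where eqZ: "obs_circle R xO yO \<inter> decision_line \<alpha> yT = {Z1, Z2}" and Zne: "Z1 \<noteq> Z2"
    using card unfolding card_2_iff by blast
  have Z1: "Z1 \<in> obs_circle R xO yO \<inter> decision_line \<alpha> yT" using eqZ by blast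
  have Z2: "Z2 \<in> obs_circle R xO yO \<inter> decision_line \<alpha> yT" using eqZ by blast
  obtain s1 x1 y1 where Z1e: "Z1 = (x1, y1)" and s10: "0 \<le> s1" and x1s: "x1 = s1 * \<alpha> \<or> x1 = - (s1 * \<alpha>)"
    and y1s: "y1 = yT + s1 * c" and c1: "(x1 - xO)\<^sup>2 + (y1 - yO)\<^sup>2 = R\<^sup>2"
    using mem_unpack[OF Z1] unfolding c_def by blast
  obtain s2 x2 y2 where Z2e: "Z2 = (x2, y2)" and s20: "0 \<le> s2" and x2s: "x2 = s2 * \<alpha> \<or> x2 = - (s2 * \<alpha>)"
    and y2s: "y2 = yT + s2 * c" and c2': "(x2 - xO)\<^sup>2 + (y2 - yO)\<^sup>2 = R\<^sup>2"
    using mem_unpack[OF Z2] unfolding c_def by blast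
  define u1 where "u1 = s1 / c"
  define u2 where "u2 = s2 / c"
  have p1: "sqrt (xO\<^sup>2 + (yO - (yT + u1))\<^sup>2) = \<alpha> * u1 + R"
    using point_eq[OF a H s10 x1s _ c1] y1s unfolding u1_def c_def by simp
  have p2: "sqrt (xO\<^sup>2 + (yO - (yT + u2))\<^sup>2) = \<alpha> * u2 + R"
    using point_eq[OF a H s20 x2s _ c2'] y2s unfolding u2_def c_def by simp
  have sqz: "F u = 0" if "sqrt (xO\<^sup>2 + (yO - (yT + u))\<^sup>2) = \<alpha> * u + R" for u
  proof -
    have "(sqrt (xO\<^sup>2 + (yO - (yT + u))\<^sup>2))\<^sup>2 = (\<alpha> * u + R)\<^sup>2" using that by simp
    then show ?thesis unfolding F_def by simp
  qed
  have F1: "F u1 = 0" using sqz[OF p1] .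
  have F2: "F u2 = 0" using sqz[OF p2] .
  have u10: "u1 \<ge> 0" and u20: "u2 \<ge> 0" unfolding u1_def u2_def using s10 s20 cpos by auto
  show False
  proof (cases "u1 = u2")
    case False
    have "k * (u1\<^sup>2 - u2\<^sup>2) - 2 * \<beta> * (u1 - u2) = 0" using F1 F2 fq[of u1] fq[of u2] by (simp add: algebra_simps)
    hence "(u1 - u2) * (k * (u1 + u2) - 2 * \<beta>) = 0" by (simp add: power2_eq_square algebra_simps)
    hence kb: "k * (u1 + u2) = 2 * \<beta>" using False by simp
    have A: "K = 2 * \<beta> * u1 - k * u1\<^sup>2" using F1 fq[of u1] by simp
    have "2 * \<beta> * u1 = (k * (u1 + u2)) * u1" using kb by simp
    hence B: "2 * \<beta> * u1 = k * u1\<^sup>2 + k * u1 * u2" by (simp add: power2_eq_square algebra_simps)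
    have KK: "K = k * u1 * u2" using A B by simp
    define m where "m = (u1 + u2) / 2"
    have "F m = k * m\<^sup>2 - k * (u1 + u2) * m + k * u1 * u2" using fq[of m] kb KK by simp
    also have "\<dots> = - k * (u1 - u2)\<^sup>2 / 4" unfolding m_def by (simp add: power2_eq_square field_simps)
    also have "\<dots> < 0" using kpos False by simp
    finally have "F m < 0" .
    moreover have "m \<ge> 0" unfolding m_def using u10 u20 by simp
    ultimately show False using Fge by force
  next
    case True
    hence ss: "s1 = s2" unfolding u1_def u2_def using cpos by simp
    hence "y1 = y2" using y1s y2s by simp
    hence xne: "x1 \<noteq> x2" using Zne Z1e Z2e by simp
    have sq1: "x1\<^sup>2 = s1\<^sup>2 * \<alpha>\<^sup>2" and sq2: "x2\<^sup>2 = s1\<^sup>2 * \<alpha>\<^sup>2"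
      using x1s x2s ss by (auto simp: power_mult_distrib)
    have "(x1 - x2) * (x1 + x2) = 0" using sq1 sq2 by (simp add: power2_eq_square algebra_simps)
    hence sum0: "x1 + x2 = 0" using xne by simp
    have "(x1 - xO)\<^sup>2 = (x2 - xO)\<^sup>2" using c1 c2' \<open>y1 = y2\<close> by simp
    hence "(x1 - x2) * (x1 + x2 - 2 * xO) = 0" by (simp add: power2_eq_square algebra_simps)
    hence xO0: "xO = 0" using xne sum0 by simp
    have s1pos: "s1 > 0"
    proof (rule ccontr)
      assume "\<not> s1 > 0"
      hence "s1 = 0" using s10 by simp
      hence "x1 = 0" "x2 = 0" using x1s x2s ss by auto
      thus False using xne by simp
    qed
    have x1pos: "x1\<^sup>2 > 0" using sq1 s1pos a by simp
    define b where "b = yO - yT"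
    have e: "(y1 - yO)\<^sup>2 = (s1 * c - b)\<^sup>2" unfolding b_def y1s by (simp add: power2_eq_square algebra_simps)
    have "x1\<^sup>2 + (s1 * c - b)\<^sup>2 = R\<^sup>2" using c1 xO0 e by simp
    hence "(s1 * c - b)\<^sup>2 < R\<^sup>2" using x1pos by linarith
    hence "\<bar>s1 * c - b\<bar>\<^sup>2 < R\<^sup>2" by simp
    hence h1: "\<bar>s1 * c - b\<bar> < R" using a(3) by (rule power2_less_imp_less[OF _ less_imp_le]) 
    have "s1 * c - u1 = (s1 * c\<^sup>2 - s1) / c" unfolding u1_def using cpos by (simp add: field_simps power2_eq_square)
    also have "\<dots> = - (s1 * \<alpha>\<^sup>2 / c)" unfolding c2 by (simp add: algebra_simps)
    finally have d1: "\<bar>s1 * c - u1\<bar> = s1 * \<alpha>\<^sup>2 / c" using s1pos cpos by simp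
    have "\<alpha> * \<alpha> < \<alpha> * 1" using a by (intro mult_strict_left_mono) auto
    hence "\<alpha>\<^sup>2 < \<alpha>" by (simp add: power2_eq_square)
    hence "s1 * \<alpha>\<^sup>2 < s1 * \<alpha>" by (rule mult_strict_left_mono[OF _ s1pos])
    hence "s1 * \<alpha>\<^sup>2 / c < s1 * \<alpha> / c" by (rule divide_strict_right_mono[OF _ cpos])
    also have "s1 * \<alpha> / c = \<alpha> * u1" unfolding u1_def by simp
    finally have h2: "\<bar>s1 * c - u1\<bar> < \<alpha> * u1" using d1 by simp
    have "\<bar>b - u1\<bar> = \<alpha> * u1 + R" using p1 xO0 unfolding b_def by (simp add: algebra_simps)
    moreover have "\<bar>b - u1\<bar> \<le> \<bar>s1 * c - b\<bar> + \<bar>s1 * c - u1\<bar>" by linarith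
    ultimately show False using h1 h2 by linarith
  qed
qed

theorem lemma9:
  fixes \<alpha> R xO yO yT :: real
  assumes "0 < \<alpha>" and "\<alpha> < 1" and "0 < R"
    and "card (obs_circle R xO yO \<inter> decision_line \<alpha> yT) = 2"
  shows "(xO, yO, yT) \<in> B2 \<alpha> R \<union> B3 \<alpha> R \<and> opt_obs \<alpha> R xO yO yT \<noteq> 0"
proof -
  note a = assms(1,2,3)
  define D where "D t = sqrt (xO\<^sup>2 + (yO - (yT + t))\<^sup>2)" for t
  obtain t0 where t00: "t0 \<ge> 0" and t0l: "D t0 < \<alpha> * t0 + R"
    using geo[OF assms] unfolding D_def by blast
  have D0: "D t \<ge> 0" for t unfolding D_def by simp
  obtain t1 where t10: "0 \<le> t1" and g1: "\<alpha> * t1 \<le> D t1" and g2: "D t1 - \<alpha> * t1 < R"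
  proof (cases "D 0 < R")
    case True then show ?thesis using D0[of 0] by (intro that[of 0]) auto
  next
    case False
    define g where "g t = D t - \<alpha> * t" for t
    define y where "y = max (g t0) 0"
    have cont: "continuous_on {0..t0} g" unfolding g_def D_def by (intro continuous_intros)
    have ya: "g t0 \<le> y" unfolding y_def by simp
    have yR: "y < R" unfolding y_def g_def using t0l a by simp
    have yb: "y \<le> g 0" using yR False unfolding g_def by simp
    obtain t1 where "0 \<le> t1" "t1 \<le> t0" "g t1 = y" using IVT2'[of g t0 y 0, OF ya yb t00 cont] by blast
    moreover have "y \<ge> 0" unfolding y_def by simp
    ultimately show ?thesis using yR by (intro that[of t1]) (auto simp: g_def)
  qed
  obtain \<theta> where q1: "(xO + \<alpha> * cos \<theta> * t1)\<^sup>2 + (yO + \<alpha> * sin \<theta> * t1 - (yT + t1))\<^sup>2 < R\<^sup>2"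
  proof (cases "D t1 = 0")
    case True
    hence "\<alpha> * t1 \<le> 0" using g1 by simp
    hence t1z: "t1 = 0" using a t10 by (simp add: mult_le_0_iff)
    have "xO\<^sup>2 + (yO - (yT + t1))\<^sup>2 = 0" using True unfolding D_def by simp
    hence "(xO + \<alpha> * cos 0 * t1)\<^sup>2 + (yO + \<alpha> * sin 0 * t1 - (yT + t1))\<^sup>2 < R\<^sup>2"
      using t1z a by simp
    then show ?thesis by (rule that)
  next
    case False
    define Dp where "Dp = D t1"
    have Dpos: "Dp > 0" using False D0 Dp_def by (simp add: order_neq_le_trans)
    have Dsq: "Dp\<^sup>2 = xO\<^sup>2 + (yO - (yT + t1))\<^sup>2" unfolding Dp_def D_def by simp
    define e1 where "e1 = - xO / Dp"
    define e2 where "e2 = (yT + t1 - yO) / Dp"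
    have "e1\<^sup>2 + e2\<^sup>2 = (xO\<^sup>2 + (yO - (yT + t1))\<^sup>2) / Dp\<^sup>2"
      unfolding e1_def e2_def by (simp add: power_divide add_divide_distrib power2_commute)
    also have "\<dots> = 1" using Dpos by (simp add: Dsq[symmetric])
    finally have "e1\<^sup>2 + e2\<^sup>2 = 1" .
    then obtain \<theta> where ct: "e1 = cos \<theta>" and st: "e2 = sin \<theta>"
      using sincos_total_2pi by blast
    define k where "k = 1 - \<alpha> * t1 / Dp"
    have ex: "xO + \<alpha> * cos \<theta> * t1 = k * xO" unfolding ct[symmetric] e1_def k_def
      by (simp add: algebra_simps)
    have ey: "yO + \<alpha> * sin \<theta> * t1 - (yT + t1) = k * (yO - (yT + t1))" unfolding st[symmetric] e2_def k_def
      using Dpos by (simp add: field_simps)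
    have "(xO + \<alpha> * cos \<theta> * t1)\<^sup>2 + (yO + \<alpha> * sin \<theta> * t1 - (yT + t1))\<^sup>2 = k\<^sup>2 * Dp\<^sup>2"
      unfolding ex ey Dsq power_mult_distrib by (rule distrib_left[symmetric])
    also have "\<dots> = (Dp - \<alpha> * t1)\<^sup>2" unfolding k_def using Dpos
      by (simp add: power_mult_distrib[symmetric] field_simps)
    also have "\<dots> < R\<^sup>2" using g1 g2 Dp_def a by (intro power_strict_mono) auto
    finally show ?thesis by (rule that)
  qed
  have pos: "t_obs \<alpha> R (\<lambda>_. \<theta>) xO yO yT > 0" by (rule lower[OF a t10 q1])
  define \<Sigma> where "\<Sigma> = {t_obs \<alpha> R \<psi> xO yO yT | \<psi>. \<psi> \<in> borel_measurable lborel}"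
  have mem: "t_obs \<alpha> R (\<lambda>_. \<theta>) xO yO yT \<in> \<Sigma>" unfolding \<Sigma>_def by auto
  have ub: "x \<le> 2 * R / (1 - \<alpha>)" if "x \<in> \<Sigma>" for x
    using that upper[OF _ a] unfolding \<Sigma>_def by auto
  have bdd: "bdd_above \<Sigma>" using ub by (auto simp: bdd_above_def)
  have oe: "opt_obs \<alpha> R xO yO yT = Sup \<Sigma>" unfolding opt_obs_def \<Sigma>_def ..
  have p: "0 < opt_obs \<alpha> R xO yO yT" unfolding oe using pos cSup_upper[OF mem bdd] by linarith
  have u: "opt_obs \<alpha> R xO yO yT \<le> 2 * R / (1 - \<alpha>)" unfolding oe using mem ub by (intro cSup_least) auto
  show ?thesis using p u unfolding B2_def B3_def by auto
qed

end
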